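(* Assume $N>2m$, where $m=\max_i r_i$. Fix all reported data except bidder $i$'s unit price. If bidder $i$ wins (is selected) under Algorithm 3 with unit price $v_i$, then it also wins with every unit price $v_i'>v_i$. Equivalently, the (deterministic) winning probability of bidder $i$ is monotonically non-decreasing in its bidding price.
   Context: Setting: a finite set of bidders $\mathcal{B}=\mathcal{B}_r\cup\mathcal{B}_u$ and $N$ resource blocks $k=1,\dots,N$, each in a sub-band $p(k)$. Bidder $i$ reports a positive integer $r_i$, a unit price $v_i\ge0$ and CQI values $c_{i,s}$ for each sub-band $s$. $\mathrm{CR}_c\ge0$ is the number of bits per RB at CQI $c$. Let $R_{ik}=v_i\mathrm{CR}_{c_{i,p(k)}}$, $m=\max_ir_i$ and $\delta=N/m$. Algorithm 3: 1. Initialize $x=0$, $\mathcal{C}_1=\emptyset$, $\mathcal{C}_2=\emptyset$, $t=0$, $\lambda_k^0=1/N$. 2. While $\mathcal{C}_1\ne\mathcal{B}$ and $\sum_k\lambda_k^t\le\exp(\delta-2)$: (a) choose $(\mu,\mathcal{D})$ maximizing $\sum_{k\in\mathcal{D}}R_{\mu k}$ over $\mu\in\mathcal{B}\setminus\mathcal{C}_1$ and $\mathcal{D}\subseteq\{1,\dots,N\}\setminus\mathcal{C}_2$ with $|\mathcal{D}|=r_\mu$; (b) set $x_\mu=1$, $a_{\mu k}=1$ for $k\in\mathcal{D}$, $\mathcal{C}_1\leftarrow\mathcal{C}_1\cup\{\mu\}$, $\mathcal{C}_2\leftarrow\mathcal{C}_2\cup\mathcal{D}$; (c) set $\lambda_k^{t+1}=\lambda_k^t\exp(\delta-2)^{r_\mu/(N-2m)}$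 for all $k$, and $t\leftarrow t+1$. Bidder $i$ wins if $x_i=1$. *)

theory Defs
  imports Complex_Main
begin

text \<open>Data of an instance: bidder set B, number of resource blocks N (blocks are 1..N),
  sub-band map p, requested block numbers r, unit prices v, CQI reports c,
  rate table CR (bits per RB at a given CQI), and a fixed deterministic
  tie-breaking priority tb (an injective ranking of candidate pairs (bidder, block set)).\<close>

definition Rval :: "('b \<Rightarrow> real) \<Rightarrow> ('b \<Rightarrow> 's \<Rightarrow> nat) \<Rightarrow> (nat \<Rightarrow> real) \<Rightarrow> (nat \<Rightarrow> 's)
                    \<Rightarrow> 'b \<Rightarrow> nat \<Rightarrow> real" where
  "Rval v c CR p i k = v i * CR (c i (p k))"

definition mmax :: "'b set \<Rightarrow> ('b \<Rightarrow> nat) \<Rightarrow> nat" where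
  "mmax B r = Max (r ` B)"

definition delta :: "nat \<Rightarrow> 'b set \<Rightarrow> ('b \<Rightarrow> nat) \<Rightarrow> real" where
  "delta N B r = real N / real (mmax B r)"

definition cands :: "'b set \<Rightarrow> nat \<Rightarrow> ('b \<Rightarrow> nat) \<Rightarrow> 'b set \<Rightarrow> nat set \<Rightarrow> ('b \<times> nat set) set" where
  "cands B N r C1 C2 = {(\<mu>, D). \<mu> \<in> B - C1 \<and> D \<subseteq> {1..N} - C2 \<and> card D = r \<mu>}"

definition maximizers ::
  "'b set \<Rightarrow> nat \<Rightarrow> ('b \<Rightarrow> nat) \<Rightarrow> ('b \<Rightarrow> real) \<Rightarrow> ('b \<Rightarrow> 's \<Rightarrow> nat) \<Rightarrow> (nat \<Rightarrow> real) \<Rightarrow> (nat \<Rightarrow> 's)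
   \<Rightarrow> 'b set \<Rightarrow> nat set \<Rightarrow> ('b \<times> nat set) set" where
  "maximizers B N r v c CR p C1 C2 =
     {x \<in> cands B N r C1 C2.
        \<forall>y \<in> cands B N r C1 C2.
          (\<Sum>k\<in>snd y. Rval v c CR p (fst y) k) \<le> (\<Sum>k\<in>snd x. Rval v c CR p (fst x) k)}"

definition choice ::
  "('b \<times> nat set \<Rightarrow> nat) \<Rightarrow> 'b set \<Rightarrow> nat \<Rightarrow> ('b \<Rightarrow> nat) \<Rightarrow> ('b \<Rightarrow> real) \<Rightarrow> ('b \<Rightarrow> 's \<Rightarrow> nat)
   \<Rightarrow> (nat \<Rightarrow> real) \<Rightarrow> (nat \<Rightarrow> 's) \<Rightarrow> 'b set \<Rightarrow> nat set \<Rightarrow> 'b \<times> nat set" where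
  "choice tb B N r v c CR p C1 C2 =
     (ARG_MIN tb x. x \<in> maximizers B N r v c CR p C1 C2)"

text \<open>The while-loop of Algorithm 3, run with fuel n. State: (C1, C2, \<lambda>).
  Each executed iteration adds a new bidder to C1, so card B iterations suffice.\<close>
fun alg3_loop ::
  "('b \<times> nat set \<Rightarrow> nat) \<Rightarrow> 'b set \<Rightarrow> nat \<Rightarrow> ('b \<Rightarrow> nat) \<Rightarrow> ('b \<Rightarrow> real) \<Rightarrow> ('b \<Rightarrow> 's \<Rightarrow> nat)
   \<Rightarrow> (nat \<Rightarrow> real) \<Rightarrow> (nat \<Rightarrow> 's) \<Rightarrow> nat \<Rightarrow> 'b set \<times> nat set \<times> (nat \<Rightarrow> real)
   \<Rightarrow> 'b set \<times> nat set \<times> (nat \<Rightarrow> real)" where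
  "alg3_loop tb B N r v c CR p 0 st = st"
| "alg3_loop tb B N r v c CR p (Suc n) (C1, C2, lam) =
     (if C1 \<noteq> B \<and> (\<Sum>k\<in>{1..N}. lam k) \<le> exp (delta N B r - 2)
         \<and> cands B N r C1 C2 \<noteq> {}
      then (let (\<mu>, D) = choice tb B N r v c CR p C1 C2
            in alg3_loop tb B N r v c CR p n
                 (C1 \<union> {\<mu>}, C2 \<union> D,
                  \<lambda>k. lam k * exp (delta N B r - 2) powr (real (r \<mu>) / (real N - 2 * real (mmax B r)))))
      else (C1, C2, lam))"

definition alg3_winners ::
  "('b \<times> nat set \<Rightarrow> nat) \<Rightarrow> 'b set \<Rightarrow> nat \<Rightarrow> ('b \<Rightarrow> nat) \<Rightarrow> ('b \<Rightarrow> real) \<Rightarrow> ('b \<Rightarrow> 's \<Rightarrow> nat)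
   \<Rightarrow> (nat \<Rightarrow> real) \<Rightarrow> (nat \<Rightarrow> 's) \<Rightarrow> 'b set" where
  "alg3_winners tb B N r v c CR p =
     fst (alg3_loop tb B N r v c CR p (card B) ({}, {}, \<lambda>k. 1 / real N))"

end

theory Submission
  imports Defs
begin

lemma loop_mono:
  "i \<in> C1 \<Longrightarrow> i \<in> fst (alg3_loop tb B N r v c CR p n (C1, C2, lam))"
proof (induction n arbitrary: C1 C2 lam)
  case 0 then show ?case by simp
next
  case (Suc n)
  obtain mu D where md: "choice tb B N r v c CR p C1 C2 = (mu, D)" by fastforce
  show ?case using Suc by (simp add: md Let_def)
qed

lemma maxset_ne:
  assumes "finite S" "S \<noteq> {}"
  shows "\<exists>x\<in>S. \<forall>y\<in>S. (f::_ \<Rightarrow> real) y \<le> f x"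
proof -
  have "Max (f ` S) \<in> f ` S" using assms by simp
  then obtain x where x: "x \<in> S" "f x = Max (f ` S)" by force
  have "\<forall>y\<in>S. f y \<le> f x"
  proof
    fix y assume "y \<in> S"
    then have "f y \<le> Max (f ` S)" using assms(1) by simp
    then show "f y \<le> f x" using x by simp
  qed
  then show ?thesis using x by blast
qed

lemma key_choice:
  fixes f g :: "'a \<Rightarrow> real" and tb :: "'a \<Rightarrow> nat"
  assumes fin: "finite S" and ne: "S \<noteq> {}" and inj: "inj_on tb S"
    and fg: "\<And>y. y \<in> S \<Longrightarrow> f y \<le> g y"
    and eq: "\<And>y. y \<in> S \<Longrightarrow> \<not> P y \<Longrightarrow> g y = f y"
    and xd: "x = (ARG_MIN tb z. z \<in> {z \<in> S. \<forall>y\<in>S. f y \<le> f z})"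
    and xd': "x' = (ARG_MIN tb z. z \<in> {z \<in> S. \<forall>y\<in>S. g y \<le> g z})"
  shows "x' = x \<or> P x'"
proof -
  define Mf where "Mf = {z \<in> S. \<forall>y\<in>S. f y \<le> f z}"
  define Mg where "Mg = {z \<in> S. \<forall>y\<in>S. g y \<le> g z}"
  obtain a where a: "a \<in> Mf" using maxset_ne[OF fin ne, of f] unfolding Mf_def by blast
  obtain a' where a': "a' \<in> Mg" using maxset_ne[OF fin ne, of g] unfolding Mg_def by blast
  have xM: "x \<in> Mf" unfolding xd Mf_def[symmetric] by (rule arg_min_natI[of "\<lambda>z. z \<in> Mf", OF a])
  have xm: "\<And>z. z \<in> Mf \<Longrightarrow> tb x \<le> tb z" unfolding xd Mf_def[symmetric] by (rule arg_min_nat_le)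
  have xM': "x' \<in> Mg" unfolding xd' Mg_def[symmetric] by (rule arg_min_natI[of "\<lambda>z. z \<in> Mg", OF a'])
  have xm': "\<And>z. z \<in> Mg \<Longrightarrow> tb x' \<le> tb z" unfolding xd' Mg_def[symmetric] by (rule arg_min_nat_le)
  have x: "x \<in> S" "\<forall>y\<in>S. f y \<le> f x" using xM unfolding Mf_def by auto
  have x': "x' \<in> S" "\<forall>y\<in>S. g y \<le> g x'" using xM' unfolding Mg_def by auto
  show ?thesis
  proof (cases "P x'")
    case True then show ?thesis by simp
  next
    case False
    have gx': "g x' = f x'" using eq[OF x'(1) False] .
    have fx': "\<forall>y\<in>S. f y \<le> f x'"
    proof
      fix y assume y: "y \<in> S"
      have "f y \<le> g y" using fg[OF y] .
      also have "\<dots> \<le> g x'" using x'(2) y by blast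
      finally show "f y \<le> f x'" using gx' by simp
    qed
    then have "x' \<in> Mf" using x'(1) unfolding Mf_def by blast
    then have t1: "tb x \<le> tb x'" using xm by blast
    have "f x' \<le> f x" using x x'(1) by blast
    moreover have "f x \<le> f x'" using fx' x(1) by blast
    moreover have "f x \<le> g x" using fg[OF x(1)] .
    moreover have "g x \<le> g x'" using x'(2) x(1) by blast
    ultimately have "g x = g x'" using gx' by linarith
    then have "\<forall>y\<in>S. g y \<le> g x" using x'(2) by simp
    then have "x \<in> Mg" using x(1) unfolding Mg_def by blast
    then have "tb x' \<le> tb x" using xm' by blast
    with t1 have "tb x = tb x'" by simp
    then show ?thesis using inj x(1) x'(1) unfolding inj_on_def by blast
  qed
qed

lemma loop_main:
  assumes fin: "finite B" and cr: "\<forall>q. CR q \<ge> 0"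
    and inj: "inj_on tb (B \<times> Pow {1..N})" and vv: "v' > v i"
  shows "i \<in> fst (alg3_loop tb B N r v c CR p n st) \<Longrightarrow>
         i \<in> fst (alg3_loop tb B N r (v(i := v')) c CR p n st)"
proof (induction n arbitrary: st)
  case 0 then show ?case by simp
next
  case (Suc n)
  obtain C1 C2 lam where st: "st = (C1, C2, lam)" by (cases st) auto
  let ?S = "cands B N r C1 C2"
  let ?f = "\<lambda>y. \<Sum>k\<in>snd y. Rval v c CR p (fst y) k"
  let ?g = "\<lambda>y. \<Sum>k\<in>snd y. Rval (v(i := v')) c CR p (fst y) k"
  let ?cond = "C1 \<noteq> B \<and> (\<Sum>k\<in>{1..N}. lam k) \<le> exp (delta N B r - 2) \<and> ?S \<noteq> {}"
  show ?case
  proof (cases ?cond)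
    case False
    show ?thesis using Suc.prems unfolding st alg3_loop.simps(2) if_not_P[OF False] by simp
  next
    case True
    have Ssub: "?S \<subseteq> B \<times> Pow {1..N}" unfolding cands_def by auto
    have finS: "finite ?S"
      by (rule finite_subset[OF Ssub]) (simp add: fin)
    have injS: "inj_on tb ?S" using inj_on_subset[OF inj Ssub] .
    have fg: "?f y \<le> ?g y" for y
    proof (cases "fst y = i")
      case True
      show ?thesis unfolding Rval_def using True vv cr
        by (intro sum_mono) (simp add: mult_right_mono)
    next
      case False then show ?thesis unfolding Rval_def by simp
    qed
    have eq: "fst y \<noteq> i \<Longrightarrow> ?g y = ?f y" for y unfolding Rval_def by simp
    obtain mu D where md: "choice tb B N r v c CR p C1 C2 = (mu, D)" by fastforce
    obtain mu' D' where md': "choice tb B N r (v(i := v')) c CR p C1 C2 = (mu', D')" by fastforce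
    have k: "(mu', D') = (mu, D) \<or> fst (mu', D') = i"
      apply (rule key_choice[OF finS True[THEN conjunct2, THEN conjunct2] injS, of ?f ?g "\<lambda>y. fst y = i"])
      using fg eq md md' by (auto simp: choice_def maximizers_def)
    have L: "alg3_loop tb B N r v c CR p (Suc n) st =
      alg3_loop tb B N r v c CR p n (C1 \<union> {mu}, C2 \<union> D,
        \<lambda>k. lam k * exp (delta N B r - 2) powr (real (r mu) / (real N - 2 * real (mmax B r))))"
      using True st md by simp
    have R: "alg3_loop tb B N r (v(i := v')) c CR p (Suc n) st =
      alg3_loop tb B N r (v(i := v')) c CR p n (C1 \<union> {mu'}, C2 \<union> D',
        \<lambda>k. lam k * exp (delta N B r - 2) powr (real (r mu') / (real N - 2 * real (mmax B r))))"
      using True st md' by simp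
    from k show ?thesis
    proof
      assume "(mu', D') = (mu, D)"
      then have e: "mu' = mu" "D' = D" by auto
      have "i \<in> fst (alg3_loop tb B N r v c CR p n (C1 \<union> {mu}, C2 \<union> D,
        \<lambda>k. lam k * exp (delta N B r - 2) powr (real (r mu) / (real N - 2 * real (mmax B r)))))"
        using Suc.prems L by simp
      then show ?thesis unfolding R e by (rule Suc.IH)
    next
      assume "fst (mu', D') = i"
      then have "mu' = i" by simp
      show ?thesis unfolding R by (rule loop_mono) (simp add: \<open>mu' = i\<close>)
    qed
  qed
qed

theorem lemma2:
  fixes B :: "'b set" and N :: nat and r :: "'b \<Rightarrow> nat" and v :: "'b \<Rightarrow> real"
    and c :: "'b \<Rightarrow> 's \<Rightarrow> nat" and CR :: "nat \<Rightarrow> real" and p :: "nat \<Rightarrow> 's"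
    and tb :: "'b \<times> nat set \<Rightarrow> nat" and i :: 'b and v' :: real
  assumes "finite B"
    and "\<forall>j\<in>B. r j > 0"
    and "\<forall>j\<in>B. v j \<ge> 0"
    and "\<forall>q. CR q \<ge> 0"
    and "inj_on tb (B \<times> Pow {1..N})"
    and "N > 2 * mmax B r"
    and "i \<in> B"
    and "v' > v i"
    and "i \<in> alg3_winners tb B N r v c CR p"
  shows "i \<in> alg3_winners tb B N r (v(i := v')) c CR p"
  using loop_main[where v=v and i=i, OF assms(1) assms(4) assms(5) assms(8)] assms(9)
  unfolding alg3_winners_def by blast

end
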